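(* Let $a>0$, $a_N=a\ln N/N$, and for $N\ge1$ let $P_{N,a_N}$ be the probability on sequences $(n_j)_{j\ge0}$ of nonnegative integers with $\sum_jn_j=N$ given by $P_{N,a_N}((n_j))\propto e^{-a_N\sum_j jn_j}$; write $\langle n_j\rangle_{N,a_N}$ for the expectation of $n_j$. Then: (i) For any $a>0$: $\lim_{N\to\infty}\frac1N\sum_{j<2/a_N}\langle n_j\rangle_{N,a_N}=1$ (complete generalized Bose–Einstein condensation). (ii) For $0<a<1$: $\lim_{N\to\infty}N^{-a}\langle n_i\rangle_{N,a_N}=1$ for every choice of $i=i(N)$ with $i=o\big(N^{1-a}/\ln^2N\big)$. (iii) For $a>1$: $\lim_{N\to\infty}N^{-1}\langle n_i\rangle_{N,a_N}=0$ for every $i\ge1$, but $\lim_{N\to\infty}N^{-\eta}\langle n_1\rangle_{N,a_N}=\infty$ for every $\eta<1$.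
   Context: This is the canonical ensemble of $N$ noninteracting bosons in a one-dimensional harmonic trap with scaled frequency $\omega\ln N/N$ at inverse temperature $\beta$, $a=\hbar\omega\beta$, $n_j$ being the occupation number of the $j$-th one-particle level. *)

theory Defs
  imports "HOL-Analysis.Analysis" "HOL-Library.Landau_Symbols"
begin

definition configs :: "nat \<Rightarrow> (nat \<Rightarrow> nat) set" where
  "configs N = {n. finite {j. n j \<noteq> 0} \<and> (\<Sum>j\<in>{j. n j \<noteq> 0}. n j) = N}"

definition energy :: "(nat \<Rightarrow> nat) \<Rightarrow> nat" where
  "energy n = (\<Sum>j\<in>{j. n j \<noteq> 0}. j * n j)"

definition weight :: "real \<Rightarrow> (nat \<Rightarrow> nat) \<Rightarrow> real" where
  "weight b n = exp (- b * real (energy n))"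

definition partition_fn :: "nat \<Rightarrow> real \<Rightarrow> real" where
  "partition_fn N b = (\<Sum>\<^sub>\<infinity>n\<in>configs N. weight b n)"

definition mean_occ :: "nat \<Rightarrow> real \<Rightarrow> nat \<Rightarrow> real" where
  "mean_occ N b j = (\<Sum>\<^sub>\<infinity>n\<in>configs N. real (n j) * weight b n) / partition_fn N b"

definition scaled_a :: "real \<Rightarrow> nat \<Rightarrow> real" where
  "scaled_a a N = a * ln (real N) / real N"

end

theory Submission
  imports Defs "HOL-Real_Asymp.Real_Asymp"
begin


lemma sum_supp_eq:
  fixes n :: "nat \<Rightarrow> nat"
  assumes "\<forall>j\<ge>M. n j = 0"
  shows "(\<Sum>j\<in>{j. n j \<noteq> 0}. f j * n j) = (\<Sum>j<M. f j * n j)"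
proof (rule sum.mono_neutral_left)
  show "{j. n j \<noteq> 0} \<subseteq> {..<M}" proof
    fix j assume "j \<in> {j. n j \<noteq> 0}"
    then have "n j \<noteq> 0" by simp
    then have "\<not> M \<le> j" using assms by fastforce
    then show "j \<in> {..<M}" by simp
  qed
qed auto

lemma sum_supp_eq1:
  fixes n :: "nat \<Rightarrow> nat"
  assumes "\<forall>j\<ge>M. n j = 0"
  shows "(\<Sum>j\<in>{j. n j \<noteq> 0}. n j) = (\<Sum>j<M. n j)"
  using sum_supp_eq[OF assms, of "\<lambda>_. 1"] by simp

lemma fin_supp: fixes n :: "nat \<Rightarrow> nat" shows "\<forall>j\<ge>M. n j = 0 \<Longrightarrow> finite {j. n j \<noteq> 0}"
proof (rule finite_subset[of _ "{..<M}"])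
  assume assms: "\<forall>j\<ge>M. n j = 0" show "{j. n j \<noteq> 0} \<subseteq> {..<M}" proof
    fix j assume "j \<in> {j. n j \<noteq> 0}"
    then have "n j \<noteq> 0" by simp
    then have "\<not> M \<le> j" using assms by fastforce
    then show "j \<in> {..<M}" by simp
  qed
qed auto

lemma configsI: fixes n :: "nat \<Rightarrow> nat" shows "\<forall>j\<ge>M. n j = 0 \<Longrightarrow> (\<Sum>j<M. n j) = N \<Longrightarrow> n \<in> configs N"
proof -
  assume a: "\<forall>j\<ge>M. n j = 0" "(\<Sum>j<M. n j) = N"
  have "finite {j. n j \<noteq> 0}" using fin_supp[OF a(1)] .
  moreover have "(\<Sum>j\<in>{j. n j \<noteq> 0}. n j) = N" using sum_supp_eq1[OF a(1)] a(2) by simp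
  ultimately show ?thesis unfolding configs_def by simp
qed

lemma configs_bnd: fixes n :: "nat \<Rightarrow> nat" shows "n \<in> configs N \<Longrightarrow> \<exists>M. \<forall>j\<ge>M. n j = 0"
proof -
  assume "n \<in> configs N"
  then have "finite {j. n j \<noteq> 0}" by (simp add: configs_def)
  then obtain M where "{j. n j \<noteq> 0} \<subseteq> {..<M}" using finite_nat_bounded by blast
  then have "\<forall>j\<ge>M. n j = 0"
  proof (intro allI impI)
    fix j assume sub: "{j. n j \<noteq> 0} \<subseteq> {..<M}" and "M \<le> j"
    then have "j \<notin> {..<M}" by simp
    then show "n j = 0" using sub by auto
  qed
  then show ?thesis by blast
qed

lemma configs_sum: fixes n :: "nat \<Rightarrow> nat" shows "n \<in> configs N \<Longrightarrow> \<forall>j\<ge>M. n j = 0 \<Longrightarrow> (\<Sum>j<M. n j) = N"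
proof -
  assume a: "n \<in> configs N" "\<forall>j\<ge>M. n j = 0"
  have "(\<Sum>j\<in>{j. n j \<noteq> 0}. n j) = N" using a(1) unfolding configs_def by simp
  then show ?thesis using sum_supp_eq1[OF a(2)] by simp
qed

lemma energy_sum: fixes n :: "nat \<Rightarrow> nat" shows "\<forall>j\<ge>M. n j = 0 \<Longrightarrow> energy n = (\<Sum>j<M. j * n j)"
  unfolding energy_def using sum_supp_eq[of M n "\<lambda>j. j"] by simp

lemma bnd_mono: fixes n :: "nat \<Rightarrow> nat" shows "\<forall>j\<ge>M. n j = 0 \<Longrightarrow> M \<le> M' \<Longrightarrow> \<forall>j\<ge>M'. n j = 0"
proof (intro allI impI)
  fix j assume a: "\<forall>j\<ge>M. n j = 0" "M \<le> M'" "M' \<le> j"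
  then have "M \<le> j" by linarith
  then show "n j = 0" using a(1)[rule_format, of j] by simp
qed

lemma configs_le: "n \<in> configs N \<Longrightarrow> n j \<le> N"
proof -
  assume n: "n \<in> configs N"
  obtain M where M: "\<forall>j\<ge>M. n j = 0" using configs_bnd[OF n] by blast
  have M2: "\<forall>i\<ge>max M (Suc j). n i = 0" using M by auto
  have "n j \<le> (\<Sum>i<max M (Suc j). n i)" by (rule member_le_sum) auto
  then show ?thesis using configs_sum[OF n M2] by simp
qed

lemma sum_upd:
  fixes n :: "nat \<Rightarrow> nat" and g :: "nat \<Rightarrow> nat"
  assumes "j < M"
  shows "(\<Sum>i<M. g i * (n(j:=v)) i) + g j * n j = (\<Sum>i<M. g i * n i) + g j * v"
proof -
  have "(\<Sum>i<M. g i * (n(j:=v)) i) = g j * v + (\<Sum>i\<in>{..<M}-{j}. g i * (n(j:=v)) i)"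
    using assms by (subst sum.remove[of _ j]) (auto intro: sum.cong)
  moreover have "(\<Sum>i<M. g i * n i) = g j * n j + (\<Sum>i\<in>{..<M}-{j}. g i * n i)"
    using assms by (subst sum.remove[of _ j]) auto
  moreover have "(\<Sum>i\<in>{..<M}-{j}. g i * (n(j:=v)) i) = (\<Sum>i\<in>{..<M}-{j}. g i * n i)"
    by (rule sum.cong) auto
  ultimately show ?thesis by simp
qed

definition inc :: "nat \<Rightarrow> nat \<Rightarrow> (nat \<Rightarrow> nat) \<Rightarrow> (nat \<Rightarrow> nat)" where
  "inc j k n = n(j := n j + k)"

definition sh :: "(nat \<Rightarrow> nat) \<Rightarrow> (nat \<Rightarrow> nat)" where
  "sh n = (\<lambda>j. n (Suc j))"

definition unsh :: "(nat \<Rightarrow> nat) \<Rightarrow> (nat \<Rightarrow> nat)" where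
  "unsh m = (\<lambda>j. case j of 0 \<Rightarrow> 0 | Suc i \<Rightarrow> m i)"

lemma inc_configs:
  assumes "m \<in> configs N"
  shows "inc j k m \<in> configs (N + k)" and "energy (inc j k m) = energy m + j * k"
proof -
  obtain M0 where M0: "\<forall>i\<ge>M0. m i = 0" using configs_bnd[OF assms] by blast
  define M where "M = max M0 (Suc j)"
  have M: "\<forall>i\<ge>M. m i = 0" "j < M" using M0 by (auto simp: M_def)
  have Mi: "\<forall>i\<ge>M. inc j k m i = 0" using M by (auto simp: inc_def)
  have s1: "(\<Sum>i<M. inc j k m i) = N + k"
    using sum_upd[OF M(2), of "\<lambda>_. 1" m "m j + k"] configs_sum[OF assms M(1)]
    by (simp add: inc_def)
  show "inc j k m \<in> configs (N + k)" by (rule configsI[OF Mi s1])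
  show "energy (inc j k m) = energy m + j * k"
    using sum_upd[OF M(2), of "\<lambda>i. i" m "m j + k"] energy_sum[OF Mi] energy_sum[OF M(1)]
    by (simp add: inc_def algebra_simps fun_upd_def)
qed

lemma dec_configs:
  assumes "n \<in> configs N" "k \<le> n j"
  shows "n(j := n j - k) \<in> configs (N - k)" and "n = inc j k (n(j := n j - k))"
proof -
  obtain M0 where M0: "\<forall>i\<ge>M0. n i = 0" using configs_bnd[OF assms(1)] by blast
  define M where "M = max M0 (Suc j)"
  have M: "\<forall>i\<ge>M. n i = 0" "j < M" using M0 by (auto simp: M_def)
  have Mi: "\<forall>i\<ge>M. (n(j := n j - k)) i = 0" using M by auto
  have s1: "(\<Sum>i<M. (n(j := n j - k)) i) = N - k"
    using sum_upd[OF M(2), of "\<lambda>_. 1" n "n j - k"] configs_sum[OF assms(1) M(1)] assms(2)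
    by simp
  show "n(j := n j - k) \<in> configs (N - k)" by (rule configsI[OF Mi s1])
  show "n = inc j k (n(j := n j - k))" using assms(2) by (auto simp: inc_def)
qed

lemma inj_inc: "inj_on (inc j k) A"
  unfolding inj_on_def inc_def
proof (intro ballI impI ext)
  fix x y i assume "x(j := x j + k) = y(j := y j + k)"
  then have "\<And>i. (x(j := x j + k)) i = (y(j := y j + k)) i" by simp
  from this[of i] this[of j] show "x i = y i" by (cases "i = j") auto
qed

lemma inc_image:
  assumes "k \<le> N"
  shows "{n \<in> configs N. k \<le> n j} = inc j k ` configs (N - k)"
proof
  show "{n \<in> configs N. k \<le> n j} \<subseteq> inc j k ` configs (N - k)"
    using dec_configs by blast
  show "inc j k ` configs (N - k) \<subseteq> {n \<in> configs N. k \<le> n j}"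
    using inc_configs[of _ "N-k" j k] assms by (auto simp: inc_def)
qed

lemma unsh_configs:
  assumes "m \<in> configs N"
  shows "unsh m \<in> configs N" "energy (unsh m) = energy m + N" "unsh m 0 = 0" "sh (unsh m) = m"
proof -
  obtain M where M: "\<forall>i\<ge>M. m i = 0" using configs_bnd[OF assms] by blast
  have Mi: "\<forall>i\<ge>Suc M. unsh m i = 0" using M by (auto simp: unsh_def split: nat.splits)
  have s: "(\<Sum>i<Suc M. unsh m i) = (\<Sum>i<M. m i)"
    by (subst sum.lessThan_Suc_shift) (simp add: unsh_def)
  show "unsh m \<in> configs N" using configsI[OF Mi] s configs_sum[OF assms M] by simp
  have e: "(\<Sum>i<Suc M. i * unsh m i) = (\<Sum>i<M. i * m i) + (\<Sum>i<M. m i)"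
    by (subst sum.lessThan_Suc_shift) (simp add: unsh_def sum.distrib)
  show "energy (unsh m) = energy m + N"
    using e energy_sum[OF Mi] energy_sum[OF M] configs_sum[OF assms M] by simp
  show "unsh m 0 = 0" by (simp add: unsh_def)
  show "sh (unsh m) = m" by (simp add: unsh_def sh_def)
qed

lemma sh_configs:
  assumes "n \<in> configs N" "n 0 = 0"
  shows "sh n \<in> configs N" "unsh (sh n) = n"
proof -
  show u: "unsh (sh n) = n" using assms(2) by (auto simp: unsh_def sh_def split: nat.splits)
  obtain M where M: "\<forall>i\<ge>M. n i = 0" using configs_bnd[OF assms(1)] by blast
  have Mi: "\<forall>i\<ge>M. sh n i = 0" using M by (auto simp: sh_def)
  have s: "(\<Sum>i<Suc M. n i) = (\<Sum>i<M. sh n i)"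
    by (subst sum.lessThan_Suc_shift) (simp add: sh_def assms(2))
  have "(\<Sum>i<Suc M. n i) = N" using configs_sum[OF assms(1)] M by auto
  then show "sh n \<in> configs N" using configsI[OF Mi] s by simp
qed

lemma unsh_image: "{n \<in> configs N. n 0 = 0} = unsh ` configs N"
proof
  show "{n \<in> configs N. n 0 = 0} \<subseteq> unsh ` configs N"
  proof
    fix n assume "n \<in> {n \<in> configs N. n 0 = 0}"
    then have "n \<in> configs N" "n 0 = 0" by auto
    then have "sh n \<in> configs N" "n = unsh (sh n)" using sh_configs by auto
    then show "n \<in> unsh ` configs N" by blast
  qed
  show "unsh ` configs N \<subseteq> {n \<in> configs N. n 0 = 0}" using unsh_configs by auto
qed

lemma inj_unsh: "inj_on unsh A"
proof (rule inj_onI)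
  fix x y assume "unsh x = unsh y"
  then have "sh (unsh x) = sh (unsh y)" by simp
  then show "x = y" by (simp add: unsh_def sh_def)
qed

lemma configs0a: "(\<lambda>_. 0) \<in> configs 0" by (rule configsI[of 0]) auto

lemma configs0b: "n \<in> configs 0 \<Longrightarrow> n = (\<lambda>_. 0)"
proof
  fix j assume "n \<in> configs 0" then show "n j = 0" using configs_le[of n 0 j] by simp
qed

lemma configs0: "configs 0 = {\<lambda>_. 0}"
proof (rule set_eqI)
  fix n show "n \<in> configs 0 \<longleftrightarrow> n \<in> {\<lambda>_. 0}"
  proof
    assume "n \<in> configs 0" then show "n \<in> {\<lambda>_. 0}" using configs0b by simp
  next
    assume "n \<in> {\<lambda>_. 0}" then show "n \<in> configs 0" using configs0a by simp
  qed
qed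

lemma gs_config: "(\<lambda>j. if j = 0 then N else 0) \<in> configs N"
  "energy (\<lambda>j. if j = 0 then N else 0) = 0"
proof -
  show "(\<lambda>j. if j = 0 then N else 0) \<in> configs N" by (rule configsI[of 1]) auto
  show "energy (\<lambda>j. if j = 0 then N else 0) = 0" by (subst energy_sum[of 1]) auto
qed



lemma weight_pos: "weight b n > 0" by (simp add: weight_def)

lemma exp_pow: "exp (- b * real n) = exp (- b) ^ n"
  using exp_of_nat_mult[of n "-b"] by (simp add: mult.commute)

lemma weight_inc: "m \<in> configs N \<Longrightarrow> weight b (inc j k m) = exp (- b) ^ (j * k) * weight b m"
proof -
  assume m: "m \<in> configs N"
  have "weight b (inc j k m) = exp (- b * real (energy m) + - b * real (j * k))"
    unfolding weight_def inc_configs(2)[OF m] by (simp add: algebra_simps)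
  also have "\<dots> = exp (- b) ^ (j * k) * weight b m"
    unfolding exp_add weight_def exp_pow by simp
  finally show ?thesis .
qed

lemma weight_unsh: "m \<in> configs N \<Longrightarrow> weight b (unsh m) = exp (- b) ^ N * weight b m"
proof -
  assume m: "m \<in> configs N"
  have "weight b (unsh m) = exp (- b * real (energy m) + - b * real N)"
    unfolding weight_def unsh_configs(2)[OF m] by (simp add: algebra_simps)
  also have "\<dots> = exp (- b) ^ N * weight b m"
    unfolding exp_add weight_def exp_pow by simp
  finally show ?thesis .
qed

lemma energy_zero: "energy (\<lambda>_. 0) = 0" by (simp add: energy_def)

lemma fin_bound:
  assumes b: "b > 0"
  shows "\<exists>C. \<forall>F. finite F \<and> F \<subseteq> configs N \<longrightarrow> sum (weight b) F \<le> C"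
proof (induction N)
  case 0
  show ?case
  proof (intro exI allI impI)
    fix F :: "(nat \<Rightarrow> nat) set" assume F: "finite F \<and> F \<subseteq> configs 0"
    then have "F \<subseteq> {\<lambda>_. 0}" using configs0 by simp
    then have "sum (weight b) F \<le> sum (weight b) {\<lambda>_. 0}"
      by (intro sum_mono2) (auto intro: less_imp_le[OF weight_pos])
    also have "\<dots> = 1" by (simp add: weight_def energy_zero)
    finally show "sum (weight b) F \<le> 1" .
  qed
next
  case (Suc N)
  obtain C0 where C0: "\<And>F. finite F \<and> F \<subseteq> configs N \<Longrightarrow> sum (weight b) F \<le> C0"
    using Suc.IH by blast
  have C0nn: "0 \<le> C0" using C0[of "{}"] by simp
  define e where "e = exp (- b) ^ Suc N"
  have e: "0 < e" "e < 1" unfolding e_def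
    by simp (rule power_Suc_less_one, simp, use b in simp)
  define C where "C = C0 / (1 - e)"
  have Cnn: "0 \<le> C" unfolding C_def using C0nn e by simp
  have CC: "C0 + e * C = C" unfolding C_def using e by (simp add: field_simps)
  have key: "\<forall>F. finite F \<and> F \<subseteq> configs (Suc N) \<and> (\<forall>n\<in>F. \<forall>j\<ge>M. n j = 0) \<longrightarrow> sum (weight b) F \<le> C" for M
  proof (induction M)
    case 0
    show ?case
    proof (intro allI impI)
      fix F :: "(nat \<Rightarrow> nat) set"
      assume F: "finite F \<and> F \<subseteq> configs (Suc N) \<and> (\<forall>n\<in>F. \<forall>j\<ge>0. n j = 0)"
      have "F = {}"
      proof (rule ccontr)
        assume "F \<noteq> {}"
        then obtain n where n: "n \<in> F" by blast
        then have "n \<in> configs (Suc N)" "\<forall>j\<ge>0. n j = 0" using F by auto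
        then have "(\<Sum>j<0. n j) = Suc N" using configs_sum by blast
        then show False by simp
      qed
      then show "sum (weight b) F \<le> C" using Cnn by simp
    qed
  next
    case (Suc M)
    show ?case
    proof (intro allI impI)
      fix F :: "(nat \<Rightarrow> nat) set"
      assume F: "finite F \<and> F \<subseteq> configs (Suc N) \<and> (\<forall>n\<in>F. \<forall>j\<ge>Suc M. n j = 0)"
      define F1 where "F1 = {n \<in> F. 1 \<le> n 0}"
      define F0 where "F0 = {n \<in> F. n 0 = 0}"
      have fin: "finite F1" "finite F0" using F unfolding F1_def F0_def by auto
      have FU: "F = F1 \<union> F0" unfolding F1_def F0_def by auto
      have disj: "F1 \<inter> F0 = {}" unfolding F1_def F0_def by auto
      define dec where "dec = (\<lambda>n::nat\<Rightarrow>nat. n(0 := n 0 - 1))"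
      have decF1: "\<And>n. n \<in> F1 \<Longrightarrow> dec n \<in> configs N \<and> n = inc 0 1 (dec n)"
      proof -
        fix n assume "n \<in> F1"
        then have n: "n \<in> configs (Suc N)" "1 \<le> n 0" using F unfolding F1_def by auto
        show "dec n \<in> configs N \<and> n = inc 0 1 (dec n)"
          using dec_configs[OF n] unfolding dec_def by simp
      qed
      have inj1: "inj_on dec F1"
        by (rule inj_onI) (metis decF1)
      have w1: "\<And>n. n \<in> F1 \<Longrightarrow> weight b (dec n) = weight b n"
      proof -
        fix n assume n: "n \<in> F1"
        have "weight b n = weight b (inc 0 1 (dec n))" using decF1[OF n] by simp
        also have "\<dots> = weight b (dec n)" using weight_inc[of "dec n" N b 0 1] decF1[OF n] by simp
        finally show "weight b (dec n) = weight b n" by simp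
      qed
      have "sum (weight b) F1 = sum (weight b) (dec ` F1)"
        using sum.reindex[OF inj1, of "weight b"] w1 by (simp add: comp_def)
      also have "\<dots> \<le> C0" using C0[of "dec ` F1"] fin decF1 by blast
      finally have s1: "sum (weight b) F1 \<le> C0" .
      have shF0: "\<And>n. n \<in> F0 \<Longrightarrow> sh n \<in> configs (Suc N) \<and> unsh (sh n) = n"
      proof -
        fix n assume "n \<in> F0"
        then have n: "n \<in> configs (Suc N)" "n 0 = 0" using F unfolding F0_def by auto
        show "sh n \<in> configs (Suc N) \<and> unsh (sh n) = n" using sh_configs[OF n] by simp
      qed
      have inj0: "inj_on sh F0"
        by (rule inj_onI) (metis shF0)
      have w0: "\<And>n. n \<in> F0 \<Longrightarrow> weight b n = e * weight b (sh n)"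
      proof -
        fix n assume n: "n \<in> F0"
        have "weight b n = weight b (unsh (sh n))" using shF0[OF n] by simp
        also have "\<dots> = e * weight b (sh n)" using weight_unsh[of "sh n" "Suc N" b] shF0[OF n]
          unfolding e_def by simp
        finally show "weight b n = e * weight b (sh n)" .
      qed
      have "sum (weight b) F0 = (\<Sum>n\<in>F0. e * weight b (sh n))" using w0 by (rule sum.cong[OF refl])
      also have "\<dots> = e * sum (weight b) (sh ` F0)"
        using sum.reindex[OF inj0, of "weight b"] by (simp add: comp_def sum_distrib_left)
      also have "\<dots> \<le> e * C"
      proof (rule mult_left_mono)
        have bnd: "\<forall>n\<in>sh ` F0. \<forall>j\<ge>M. n j = 0"
        proof (intro ballI allI impI)
          fix n j assume "n \<in> sh ` F0" "M \<le> j"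
          then obtain m where m: "m \<in> F0" "n = sh m" by blast
          have "m \<in> F" using m(1) unfolding F0_def by simp
          then have "\<forall>j\<ge>Suc M. m j = 0" using F by simp
          then have "m (Suc j) = 0" using \<open>M \<le> j\<close> by simp
          then show "n j = 0" using m(2) by (simp add: sh_def)
        qed
        have "finite (sh ` F0)" using fin by simp
        moreover have "sh ` F0 \<subseteq> configs (Suc N)" using shF0 by auto
        ultimately show "sum (weight b) (sh ` F0) \<le> C" using Suc.IH bnd by blast
      qed (use e in simp)
      finally have s0: "sum (weight b) F0 \<le> e * C" .
      have "sum (weight b) F = sum (weight b) F1 + sum (weight b) F0"
        unfolding FU using fin disj by (simp add: sum.union_disjoint)
      also have "\<dots> \<le> C" using s1 s0 CC by linarith
      finally show "sum (weight b) F \<le> C" .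
    qed
  qed
  show ?case
  proof (intro exI allI impI)
    fix F :: "(nat \<Rightarrow> nat) set" assume F: "finite F \<and> F \<subseteq> configs (Suc N)"
    have "finite (\<Union>n\<in>F. {j. n j \<noteq> 0})"
      using F by (auto simp: configs_def)
    then obtain M where M: "(\<Union>n\<in>F. {j. n j \<noteq> 0}) \<subseteq> {..<M}" using finite_nat_bounded by blast
    have "\<forall>n\<in>F. \<forall>j\<ge>M. n j = 0"
    proof (intro ballI allI impI)
      fix n j assume "n \<in> F" "M \<le> j"
      then have "j \<notin> {..<M}" by simp
      then show "n j = 0" using M \<open>n \<in> F\<close> by auto
    qed
    then show "sum (weight b) F \<le> C" using key F by blast
  qed
qed



lemma w_summable:
  assumes b: "b > 0"
  shows "weight b summable_on configs N"
proof (rule nonneg_bdd_above_summable_on)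
  show "\<And>x. x \<in> configs N \<Longrightarrow> 0 \<le> weight b x" using weight_pos less_imp_le by blast
  obtain C where C: "\<forall>F. finite F \<and> F \<subseteq> configs N \<longrightarrow> sum (weight b) F \<le> C"
    using fin_bound[OF b] by blast
  show "bdd_above (sum (weight b) ` {F. F \<subseteq> configs N \<and> finite F})"
    by (rule bdd_aboveI[of _ C]) (use C in auto)
qed

lemma w_summable_sub:
  assumes b: "b > 0" and "A \<subseteq> configs N"
  shows "weight b summable_on A"
  using summable_on_subset[OF w_summable[OF b] assms(2)] .

lemma Z_sub:
  assumes b: "b > 0" and k: "k \<le> N"
  shows "infsum (weight b) {n \<in> configs N. k \<le> n j} = exp (- b) ^ (j * k) * partition_fn (N - k) b"
proof -
  have "infsum (weight b) {n \<in> configs N. k \<le> n j} = infsum (weight b) (inc j k ` configs (N - k))"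
    using inc_image[OF k] by simp
  also have "\<dots> = infsum (weight b \<circ> inc j k) (configs (N - k))"
    by (rule infsum_reindex[OF inj_inc])
  also have "\<dots> = infsum (\<lambda>m. exp (- b) ^ (j * k) * weight b m) (configs (N - k))"
    by (rule infsum_cong) (simp add: weight_inc)
  also have "\<dots> = exp (- b) ^ (j * k) * infsum (weight b) (configs (N - k))"
    by (rule infsum_cmult_right) (rule w_summable[OF b])
  finally show ?thesis unfolding partition_fn_def .
qed

lemma Z_rec:
  assumes b: "b > 0"
  shows "partition_fn (Suc N) b = partition_fn N b + exp (- b) ^ Suc N * partition_fn (Suc N) b"
proof -
  define A1 where "A1 = {n \<in> configs (Suc N). 1 \<le> n 0}"
  define A0 where "A0 = {n \<in> configs (Suc N). n 0 = 0}"
  have U: "configs (Suc N) = A1 \<union> A0" unfolding A1_def A0_def by auto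
  have D: "A1 \<inter> A0 = {}" unfolding A1_def A0_def by auto
  have s1: "weight b summable_on A1" by (rule w_summable_sub[OF b]) (auto simp: A1_def)
  have s0: "weight b summable_on A0" by (rule w_summable_sub[OF b]) (auto simp: A0_def)
  have i1: "infsum (weight b) A1 = partition_fn N b"
    unfolding A1_def using Z_sub[OF b, of 1 "Suc N" 0] by simp
  have "infsum (weight b) A0 = infsum (weight b) (unsh ` configs (Suc N))"
    unfolding A0_def using unsh_image by simp
  also have "\<dots> = infsum (weight b \<circ> unsh) (configs (Suc N))"
    by (rule infsum_reindex[OF inj_unsh])
  also have "\<dots> = infsum (\<lambda>m. exp (- b) ^ Suc N * weight b m) (configs (Suc N))"
    by (rule infsum_cong) (simp add: weight_unsh)
  also have "\<dots> = exp (- b) ^ Suc N * partition_fn (Suc N) b"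
    unfolding partition_fn_def by (rule infsum_cmult_right) (rule w_summable[OF b])
  finally have i0: "infsum (weight b) A0 = exp (- b) ^ Suc N * partition_fn (Suc N) b" .
  have "partition_fn (Suc N) b = infsum (weight b) A1 + infsum (weight b) A0"
    unfolding partition_fn_def U by (rule infsum_Un_disjoint[OF s1 s0 D])
  then show ?thesis using i1 i0 by simp
qed

lemma Z_ge1:
  assumes b: "b > 0"
  shows "partition_fn N b \<ge> 1"
proof -
  let ?g = "\<lambda>j::nat. if j = 0 then N else 0"
  have "sum (weight b) {?g} \<le> infsum (weight b) (configs N)"
    by (rule finite_sum_le_infsum[OF w_summable[OF b]]) (use gs_config less_imp_le[OF weight_pos] in auto)
  moreover have "sum (weight b) {?g} = 1" using gs_config(2) by (simp add: weight_def)
  ultimately show ?thesis unfolding partition_fn_def by simp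
qed

lemma has_sum_finsum:
  fixes f :: "'i \<Rightarrow> 'a \<Rightarrow> real"
  assumes "finite I" "\<And>i. i \<in> I \<Longrightarrow> (f i has_sum s i) A"
  shows "((\<lambda>x. \<Sum>i\<in>I. f i x) has_sum (\<Sum>i\<in>I. s i)) A"
  using assms
proof (induction I rule: finite_induct)
  case empty then show ?case by simp
next
  case (insert i I)
  have "((\<lambda>x. f i x + (\<Sum>i\<in>I. f i x)) has_sum (s i + (\<Sum>i\<in>I. s i))) A"
    by (rule has_sum_add) (use insert in auto)
  then show ?case using insert by simp
qed

lemma count_sum:
  assumes "x \<le> N"
  shows "(\<Sum>k<N. if Suc k \<le> x then c else 0) = real x * (c::real)"
proof -
  have "(\<Sum>k<N. if Suc k \<le> x then c else 0) = (\<Sum>k\<in>{..<N} \<inter> {k. Suc k \<le> x}. c)"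
    by (simp add: sum.If_cases)
  also have "{..<N} \<inter> {k. Suc k \<le> x} = {..<x}" using assms by auto
  finally show ?thesis by simp
qed

lemma mean_num:
  assumes b: "b > 0"
  shows "infsum (\<lambda>n. real (n j) * weight b n) (configs N)
        = (\<Sum>k<N. exp (- b) ^ (j * Suc k) * partition_fn (N - Suc k) b)"
proof -
  define S where "S k = {n \<in> configs N. Suc k \<le> n j}" for k
  have hs: "((\<lambda>n. if Suc k \<le> n j then weight b n else 0) has_sum infsum (weight b) (S k)) (configs N)" for k
  proof -
    have "(weight b has_sum infsum (weight b) (S k)) (S k)"
      by (rule has_sum_infsum, rule w_summable_sub[OF b]) (auto simp: S_def)
    then show ?thesis
      by (subst has_sum_cong_neutral[where T = "S k" and g = "weight b"]) (auto simp: S_def)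
  qed
  have "((\<lambda>n. \<Sum>k<N. if Suc k \<le> n j then weight b n else 0) has_sum (\<Sum>k<N. infsum (weight b) (S k))) (configs N)"
    by (rule has_sum_finsum) (use hs in auto)
  then have "((\<lambda>n. real (n j) * weight b n) has_sum (\<Sum>k<N. infsum (weight b) (S k))) (configs N)"
  proof (rule has_sum_cong[THEN iffD1, rotated])
    fix n assume "n \<in> configs N"
    then show "(\<Sum>k<N. if Suc k \<le> n j then weight b n else 0) = real (n j) * weight b n"
      using count_sum[OF configs_le] by simp
  qed
  then have "infsum (\<lambda>n. real (n j) * weight b n) (configs N) = (\<Sum>k<N. infsum (weight b) (S k))"
    by (rule infsumI)
  also have "\<dots> = (\<Sum>k<N. exp (- b) ^ (j * Suc k) * partition_fn (N - Suc k) b)"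
    by (rule sum.cong[OF refl]) (simp add: S_def Z_sub[OF b])
  finally show ?thesis .
qed

definition PP :: "real \<Rightarrow> nat \<Rightarrow> nat \<Rightarrow> real" where
  "PP q N k = (\<Prod>i<k. 1 - q ^ (N - i))"

lemma Z_ratio:
  assumes b: "b > 0"
  shows "k \<le> N \<Longrightarrow> partition_fn (N - k) b = PP (exp (- b)) N k * partition_fn N b"
proof (induction k)
  case 0 then show ?case by (simp add: PP_def)
next
  case (Suc k)
  define m where "m = N - Suc k"
  have m: "Suc m = N - k" using Suc.prems unfolding m_def by simp
  have "partition_fn m b = (1 - exp (- b) ^ Suc m) * partition_fn (Suc m) b"
    using Z_rec[OF b, of m] by (simp add: algebra_simps)
  also have "\<dots> = (1 - exp (- b) ^ (N - k)) * (PP (exp (- b)) N k * partition_fn N b)"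
    using Suc m by simp
  finally show ?case unfolding m_def by (simp add: PP_def)
qed

lemma mean_formula:
  assumes b: "b > 0"
  shows "mean_occ N b j = (\<Sum>k<N. exp (- b) ^ (j * Suc k) * PP (exp (- b)) N (Suc k))"
proof -
  have Z: "partition_fn N b \<noteq> 0" using Z_ge1[OF b, of N] by simp
  have "mean_occ N b j = (\<Sum>k<N. exp (- b) ^ (j * Suc k) * partition_fn (N - Suc k) b) / partition_fn N b"
    unfolding mean_occ_def mean_num[OF b] ..
  also have "\<dots> = (\<Sum>k<N. exp (- b) ^ (j * Suc k) * PP (exp (- b)) N (Suc k) * partition_fn N b) / partition_fn N b"
    by (rule arg_cong[where f = "\<lambda>x. x / _"], rule sum.cong[OF refl]) (simp add: Z_ratio[OF b])
  also have "\<dots> = (\<Sum>k<N. exp (- b) ^ (j * Suc k) * PP (exp (- b)) N (Suc k))"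
    using Z by (simp add: sum_distrib_right[symmetric])
  finally show ?thesis .
qed



lemma PP_Suc_k: "PP q N (Suc k) = PP q N k * (1 - q ^ (N - k))"
  by (simp add: PP_def)

lemma PP_Suc_N: "PP q (Suc N) (Suc k) = (1 - q ^ Suc N) * PP q N k"
  unfolding PP_def by (subst prod.lessThan_Suc_shift) simp

lemma PP_nonneg: "0 \<le> q \<Longrightarrow> q \<le> 1 \<Longrightarrow> 0 \<le> PP q N k"
  unfolding PP_def by (intro prod_nonneg) (simp add: power_le_one)

lemma PP_le1: "0 \<le> q \<Longrightarrow> q \<le> 1 \<Longrightarrow> PP q N k \<le> 1"
  unfolding PP_def by (intro prod_le_1) (auto simp: power_le_one)

lemma PP_upper: "0 \<le> q \<Longrightarrow> q \<le> 1 \<Longrightarrow> PP q N k \<le> (1 - q ^ N) ^ k"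
proof -
  assume q: "0 \<le> q" "q \<le> 1"
  have "PP q N k \<le> (\<Prod>i<k. 1 - q ^ N)" unfolding PP_def
  proof (rule prod_mono)
    fix i assume "i \<in> {..<k}"
    have "q ^ N \<le> q ^ (N - i)" using q by (intro power_decreasing) auto
    then show "0 \<le> 1 - q ^ (N - i) \<and> 1 - q ^ (N - i) \<le> 1 - q ^ N"
      using q by (simp add: power_le_one)
  qed
  then show ?thesis by simp
qed

lemma PP_lower: "0 \<le> q \<Longrightarrow> q \<le> 1 \<Longrightarrow> k \<le> K \<Longrightarrow> K \<le> N \<Longrightarrow> (1 - q ^ (N + 1 - K)) ^ k \<le> PP q N k"
proof -
  assume q: "0 \<le> q" "q \<le> 1" and kK: "k \<le> K" "K \<le> N"
  have "(\<Prod>i<k. 1 - q ^ (N + 1 - K)) \<le> PP q N k" unfolding PP_def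
  proof (rule prod_mono)
    fix i assume "i \<in> {..<k}"
    then have "N + 1 - K \<le> N - i" using kK by auto
    then have "q ^ (N - i) \<le> q ^ (N + 1 - K)" using q by (intro power_decreasing) auto
    then show "0 \<le> 1 - q ^ (N + 1 - K) \<and> 1 - q ^ (N + 1 - K) \<le> 1 - q ^ (N - i)"
      using q by (simp add: power_le_one)
  qed
  then show ?thesis by simp
qed

lemma PP_ident:
  assumes q: "0 < q" "q < 1"
  shows "(\<Sum>k<N. PP q N (Suc k) / (1 - q ^ Suc k)) = real N"
proof (induction N)
  case 0 then show ?case by simp
next
  case (Suc N)
  have den: "\<And>m. 1 - q ^ Suc m \<noteq> 0"
    using q by (metis power_Suc_less_one less_irrefl right_minus_eq)
  have tm: "(1 - q ^ Suc N) * PP q N k / (1 - q ^ Suc k)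
      = PP q N (Suc k) / (1 - q ^ Suc k) + (PP q N k - PP q N (Suc k))" if k: "k < N" for k
  proof -
    have e: "q ^ Suc N = q ^ (N - k) * q ^ Suc k"
      using k by (simp add: power_add[symmetric])
    show ?thesis unfolding PP_Suc_k e using den[of k]
      by (simp add: field_simps)
  qed
  have "(\<Sum>k<Suc N. PP q (Suc N) (Suc k) / (1 - q ^ Suc k))
      = (\<Sum>k<Suc N. (1 - q ^ Suc N) * PP q N k / (1 - q ^ Suc k))"
    by (simp add: PP_Suc_N)
  also have "\<dots> = (\<Sum>k<N. (1 - q ^ Suc N) * PP q N k / (1 - q ^ Suc k)) + PP q N N"
    using den[of N] by simp
  also have "(\<Sum>k<N. (1 - q ^ Suc N) * PP q N k / (1 - q ^ Suc k))
      = (\<Sum>k<N. PP q N (Suc k) / (1 - q ^ Suc k)) + (\<Sum>k<N. PP q N k - PP q N (Suc k))"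
    by (subst sum.distrib[symmetric], rule sum.cong[OF refl], rule tm) simp
  also have "(\<Sum>k<N. PP q N k - PP q N (Suc k)) = PP q N 0 - PP q N N"
    by (rule sum_lessThan_telescope')
  finally show ?case using Suc.IH by (simp add: PP_def)
qed

lemma gp1:
  fixes x :: real
  assumes "0 \<le> x" "x < 1"
  shows "(\<Sum>k<n. x ^ Suc k) = x * (1 - x ^ n) / (1 - x)"
proof -
  have "(\<Sum>k<n. x ^ Suc k) = x * (\<Sum>k<n. x ^ k)" by (simp add: sum_distrib_left)
  then show ?thesis using assms by (simp add: sum_gp_strict)
qed

lemma gp_le:
  fixes x :: real
  assumes "0 \<le> x" "x < 1"
  shows "(\<Sum>k<n. x ^ Suc k) \<le> x / (1 - x)"
proof -
  have "x * (1 - x ^ n) \<le> x" using assms by (simp add: mult_left_le power_le_one zero_le_power)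
  then show ?thesis unfolding gp1[OF assms] using assms by (simp add: divide_right_mono)
qed



lemma q_facts: "(b::real) > 0 \<Longrightarrow> 0 < exp (- b) \<and> exp (- b) < 1"
  by simp

lemma aux_div: fixes d z P :: real shows "(1 - z) / d * P = P / d - P * z / d"
  by (simp add: diff_divide_distrib algebra_simps)

lemma mean_nonneg:
  assumes b: "b > 0" shows "0 \<le> mean_occ N b j"
  unfolding mean_formula[OF b] using q_facts[OF b]
  by (intro sum_nonneg mult_nonneg_nonneg PP_nonneg) auto

lemma mean_upper_j:
  assumes b: "b > 0" and j: "j \<ge> 1"
  shows "mean_occ N b j \<le> 1 / (1 - exp (- b))"
proof -
  define q where "q = exp (- b)"
  have q: "0 < q" "q < 1" using q_facts[OF b] unfolding q_def by auto
  have "mean_occ N b j = (\<Sum>k<N. q ^ (j * Suc k) * PP q N (Suc k))"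
    unfolding mean_formula[OF b] q_def ..
  also have "\<dots> \<le> (\<Sum>k<N. q ^ Suc k)"
  proof (rule sum_mono)
    fix k assume "k \<in> {..<N}"
    have "Suc k \<le> j * Suc k" using mult_le_mono1[OF j, of "Suc k"] by simp
    then have "q ^ (j * Suc k) \<le> q ^ Suc k" using q by (intro power_decreasing) auto
    moreover have "PP q N (Suc k) \<le> 1" "0 \<le> PP q N (Suc k)" using q by (auto intro: PP_le1 PP_nonneg)
    ultimately have "q ^ (j * Suc k) * PP q N (Suc k) \<le> q ^ (j * Suc k)"
      using q by (intro mult_left_le) auto
    then show "q ^ (j * Suc k) * PP q N (Suc k) \<le> q ^ Suc k"
      using \<open>q ^ (j * Suc k) \<le> q ^ Suc k\<close> by linarith
  qed
  also have "\<dots> \<le> q / (1 - q)" using q by (intro gp_le) auto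
  also have "\<dots> \<le> 1 / (1 - q)" using q by (intro divide_right_mono) auto
  finally show ?thesis unfolding q_def .
qed

lemma mean_upper_all:
  assumes b: "b > 0"
  shows "mean_occ N b j \<le> 1 / exp (- b) ^ N"
proof -
  define q where "q = exp (- b)"
  have q: "0 < q" "q < 1" using q_facts[OF b] unfolding q_def by auto
  define x where "x = 1 - q ^ N"
  have x: "0 \<le> x" "x < 1" unfolding x_def using q by (auto simp: power_le_one)
  have "mean_occ N b j = (\<Sum>k<N. q ^ (j * Suc k) * PP q N (Suc k))"
    unfolding mean_formula[OF b] q_def ..
  also have "\<dots> \<le> (\<Sum>k<N. x ^ Suc k)"
  proof (rule sum_mono)
    fix k assume "k \<in> {..<N}"
    have "q ^ (j * Suc k) \<le> 1" using q by (simp add: power_le_one)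
    moreover have "PP q N (Suc k) \<le> x ^ Suc k" unfolding x_def by (rule PP_upper) (use q in auto)
    moreover have "0 \<le> PP q N (Suc k)" using q by (auto intro: PP_nonneg)
    ultimately have "q ^ (j * Suc k) * PP q N (Suc k) \<le> PP q N (Suc k)"
      using q by (intro mult_left_le_one_le) auto
    then show "q ^ (j * Suc k) * PP q N (Suc k) \<le> x ^ Suc k"
      using \<open>PP q N (Suc k) \<le> x ^ Suc k\<close> by linarith
  qed
  also have "\<dots> \<le> x / (1 - x)" using x by (intro gp_le) auto
  also have "\<dots> \<le> 1 / (1 - x)" using x by (intro divide_right_mono) auto
  finally show ?thesis unfolding q_def x_def by simp
qed

lemma sum_mean:
  assumes b: "b > 0"
  shows "(\<Sum>j<J. mean_occ N b j)
     = real N - (\<Sum>k<N. PP (exp (- b)) N (Suc k) * exp (- b) ^ (J * Suc k) / (1 - exp (- b) ^ Suc k))"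
proof -
  define q where "q = exp (- b)"
  have q: "0 < q" "q < 1" using q_facts[OF b] unfolding q_def by auto
  have den: "\<And>m. 1 - q ^ Suc m \<noteq> 0"
    using q by (metis power_Suc_less_one less_irrefl right_minus_eq)
  have "(\<Sum>j<J. mean_occ N b j) = (\<Sum>j<J. \<Sum>k<N. q ^ (j * Suc k) * PP q N (Suc k))"
    unfolding mean_formula[OF b] q_def ..
  also have "\<dots> = (\<Sum>k<N. \<Sum>j<J. q ^ (j * Suc k) * PP q N (Suc k))"
    by (rule sum.swap)
  also have "\<dots> = (\<Sum>k<N. PP q N (Suc k) / (1 - q ^ Suc k) - PP q N (Suc k) * q ^ (J * Suc k) / (1 - q ^ Suc k))"
  proof (rule sum.cong[OF refl])
    fix k
    have "(\<Sum>j<J. q ^ (j * Suc k) * PP q N (Suc k)) = (\<Sum>j<J. (q ^ Suc k) ^ j * PP q N (Suc k))"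
      by (rule sum.cong[OF refl]) (simp only: power_mult[symmetric] ac_simps)
    also have "\<dots> = (\<Sum>j<J. (q ^ Suc k) ^ j) * PP q N (Suc k)"
      by (rule sum_distrib_right[symmetric])
    also have "\<dots> = (1 - (q ^ Suc k) ^ J) / (1 - q ^ Suc k) * PP q N (Suc k)"
      using den[of k] by (simp add: sum_gp_strict)
    also have "(q ^ Suc k) ^ J = q ^ (J * Suc k)" by (simp only: power_mult[symmetric] ac_simps)
    also have "(1 - q ^ (J * Suc k)) / (1 - q ^ Suc k) * PP q N (Suc k) = PP q N (Suc k) / (1 - q ^ Suc k) - PP q N (Suc k) * q ^ (J * Suc k) / (1 - q ^ Suc k)"
      by (rule aux_div)
    finally show "(\<Sum>j<J. q ^ (j * Suc k) * PP q N (Suc k)) = \<dots>" .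
  qed
  also have "\<dots> = real N - (\<Sum>k<N. PP q N (Suc k) * q ^ (J * Suc k) / (1 - q ^ Suc k))"
    by (simp only: sum_subtractf PP_ident[OF q])
  finally show ?thesis unfolding q_def .
qed

lemma sum_mean_bounds:
  assumes b: "b > 0" and J: "exp (- b) ^ J \<le> 1 / 2"
  shows "real N - 1 / (1 - exp (- b)) \<le> (\<Sum>j<J. mean_occ N b j)"
    and "(\<Sum>j<J. mean_occ N b j) \<le> real N"
proof -
  define q where "q = exp (- b)"
  have q: "0 < q" "q < 1" using q_facts[OF b] unfolding q_def by auto
  define R where "R = (\<Sum>k<N. PP q N (Suc k) * q ^ (J * Suc k) / (1 - q ^ Suc k))"
  have S: "(\<Sum>j<J. mean_occ N b j) = real N - R" unfolding R_def q_def by (rule sum_mean[OF b])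
  have den: "0 < 1 - q ^ Suc m" for m
  proof -
    have "q ^ Suc m < 1" by (rule power_Suc_less_one) (use q in auto)
    then show ?thesis by simp
  qed
  have "0 \<le> R" unfolding R_def using q den
    by (intro sum_nonneg divide_nonneg_pos mult_nonneg_nonneg PP_nonneg) auto
  then show "(\<Sum>j<J. mean_occ N b j) \<le> real N" using S by simp
  define x where "x = q ^ J"
  have x: "0 \<le> x" "x \<le> 1/2" using J q unfolding x_def q_def by auto
  have "R \<le> (\<Sum>k<N. x ^ Suc k / (1 - q))" unfolding R_def
  proof (rule sum_mono)
    fix k assume "k \<in> {..<N}"
    have "q ^ Suc k \<le> q" using q by (intro power_decreasing[of 1, simplified]) auto
    then have d: "1 - q \<le> 1 - q ^ Suc k" by simp
    have "PP q N (Suc k) * q ^ (J * Suc k) \<le> x ^ Suc k"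
      using q PP_le1[of q N "Suc k"] unfolding x_def power_mult
      by (simp add: mult_left_le_one_le)
    moreover have "0 \<le> PP q N (Suc k) * q ^ (J * Suc k)" using q by (simp add: PP_nonneg)
    ultimately show "PP q N (Suc k) * q ^ (J * Suc k) / (1 - q ^ Suc k) \<le> x ^ Suc k / (1 - q)"
      using q d den[of k] by (intro frac_le) auto
  qed
  also have "\<dots> = (\<Sum>k<N. x ^ Suc k) / (1 - q)" by (simp add: sum_divide_distrib)
  also have "\<dots> \<le> (x / (1 - x)) / (1 - q)" using x q by (intro divide_right_mono gp_le) auto
  also have "\<dots> \<le> 1 / (1 - q)" using x q by (intro divide_right_mono) (auto simp: field_simps)
  finally show "real N - 1 / (1 - exp (- b)) \<le> (\<Sum>j<J. mean_occ N b j)" using S unfolding q_def by simp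
qed

lemma mean1_lower:
  assumes b: "b > 0"
  shows "(\<Sum>k<N. exp (- b) ^ Suc k) - (real N)^2 * exp (- b) ^ N \<le> mean_occ N b 1"
proof -
  define q where "q = exp (- b)"
  have q: "0 < q" "q < 1" using q_facts[OF b] unfolding q_def by auto
  have "(\<Sum>k<N. q ^ Suc k - real (Suc k) * q ^ N) \<le> (\<Sum>k<N. q ^ Suc k * PP q N (Suc k))"
  proof (rule sum_mono)
    fix k assume k: "k \<in> {..<N}"
    have "1 + real (Suc k) * (- (q ^ (N - k))) \<le> (1 + (- (q ^ (N - k)))) ^ Suc k"
      using q by (intro Bernoulli_inequality) (simp add: power_le_one)
    then have "1 - real (Suc k) * q ^ (N - k) \<le> (1 - q ^ (N - k)) ^ Suc k" by simp
    also have "\<dots> \<le> PP q N (Suc k)"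
      using PP_lower[of q "Suc k" "Suc k" N] q k by simp
    finally have P: "1 - real (Suc k) * q ^ (N - k) \<le> PP q N (Suc k)" by simp
    have e: "q ^ Suc k * q ^ (N - k) = q ^ Suc N"
    proof -
      have "Suc k + (N - k) = Suc N" using k by simp
      then show ?thesis by (metis power_add)
    qed
    have "q ^ Suc k - real (Suc k) * q ^ Suc N = q ^ Suc k * (1 - real (Suc k) * q ^ (N - k))"
      by (subst e[symmetric]) (simp add: algebra_simps)
    also have "\<dots> \<le> q ^ Suc k * PP q N (Suc k)" using P q by (simp add: mult_left_mono)
    finally have "q ^ Suc k - real (Suc k) * q ^ Suc N \<le> q ^ Suc k * PP q N (Suc k)" .
    moreover have "q ^ Suc N \<le> q ^ N" using q by (intro power_decreasing) auto
    then have "real (Suc k) * q ^ Suc N \<le> real (Suc k) * q ^ N" by (intro mult_left_mono) auto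
    ultimately show "q ^ Suc k - real (Suc k) * q ^ N \<le> q ^ Suc k * PP q N (Suc k)"
      by linarith
  qed
  moreover have "(\<Sum>k<N. q ^ Suc k - real (Suc k) * q ^ N) \<ge> (\<Sum>k<N. q ^ Suc k) - (real N)^2 * q ^ N"
  proof -
    have "(\<Sum>k<N. real (Suc k)) \<le> (\<Sum>k<N. real N)" by (intro sum_mono) auto
    then have "(\<Sum>k<N. real (Suc k)) * q ^ N \<le> (real N)^2 * q ^ N"
      using q by (intro mult_right_mono) (auto simp: power2_eq_square)
    then show ?thesis by (simp add: sum_subtractf sum_distrib_right)
  qed
  moreover have "mean_occ N b 1 = (\<Sum>k<N. q ^ Suc k * PP q N (Suc k))"
    unfolding mean_formula[OF b] q_def by simp
  ultimately show ?thesis unfolding q_def by linarith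
qed

lemma mean_lowerK:
  assumes b: "b > 0" and K: "K \<le> N"
  shows "exp (- b) ^ (i * K) * (\<Sum>k<K. (1 - exp (- b) ^ (N + 1 - K)) ^ Suc k) \<le> mean_occ N b i"
proof -
  define q where "q = exp (- b)"
  have q: "0 < q" "q < 1" using q_facts[OF b] unfolding q_def by auto
  define y where "y = 1 - q ^ (N + 1 - K)"
  have "q ^ (i * K) * (\<Sum>k<K. y ^ Suc k) = (\<Sum>k<K. q ^ (i * K) * y ^ Suc k)"
    by (simp add: sum_distrib_left)
  also have "\<dots> \<le> (\<Sum>k<K. q ^ (i * Suc k) * PP q N (Suc k))"
  proof (rule sum_mono)
    fix k assume k: "k \<in> {..<K}"
    have "i * Suc k \<le> i * K" using k by (intro mult_le_mono2) auto
    then have "q ^ (i * K) \<le> q ^ (i * Suc k)" using q by (intro power_decreasing) auto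
    moreover have "y ^ Suc k \<le> PP q N (Suc k)" unfolding y_def using q k K by (intro PP_lower) auto
    moreover have "0 \<le> y ^ Suc k" unfolding y_def using q by (simp add: power_le_one)
    ultimately show "q ^ (i * K) * y ^ Suc k \<le> q ^ (i * Suc k) * PP q N (Suc k)"
      using q by (intro mult_mono) auto
  qed
  also have "\<dots> \<le> (\<Sum>k<N. q ^ (i * Suc k) * PP q N (Suc k))"
    using K q by (intro sum_mono2) (auto intro!: mult_nonneg_nonneg PP_nonneg simp: less_imp_le)
  also have "\<dots> = mean_occ N b i" unfolding mean_formula[OF b] q_def ..
  finally show ?thesis unfolding q_def y_def .
qed



lemma sa_pos: "a > 0 \<Longrightarrow> N \<ge> 2 \<Longrightarrow> scaled_a a N > 0"
  unfolding scaled_a_def by (intro divide_pos_pos mult_pos_pos) auto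

lemma qN_powr:
  assumes "N \<ge> 1"
  shows "exp (- scaled_a a N) ^ N = real N powr (- a)"
proof -
  have "exp (- scaled_a a N) ^ N = exp (- scaled_a a N * real N)" by (rule exp_pow[symmetric])
  also have "- scaled_a a N * real N = - a * ln (real N)" using assms by (simp add: scaled_a_def)
  also have "exp (- a * ln (real N)) = real N powr (- a)" using assms by (simp add: powr_def)
  finally show ?thesis .
qed

lemma one_minus_q_le: "1 - exp (- b) \<le> (b::real)"
  using exp_ge_add_one_self[of "- b"] by simp

lemma part3a:
  assumes a: "a > 1" and i: "i \<ge> 1"
  shows "(\<lambda>N. mean_occ N (scaled_a a N) i / real N) \<longlonglongrightarrow> 0"
proof (rule real_tendsto_sandwich)
  show "eventually (\<lambda>N. 0 \<le> mean_occ N (scaled_a a N) i / real N) sequentially"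
    by (rule eventually_sequentiallyI[of 2]) (use a sa_pos mean_nonneg in auto)
  show "eventually (\<lambda>N. mean_occ N (scaled_a a N) i / real N \<le> 1 / (real N * (1 - exp (- (a * ln (real N) / real N))))) sequentially"
  proof (rule eventually_sequentiallyI[of 2])
    fix N :: nat assume N: "2 \<le> N"
    have b: "scaled_a a N > 0" using sa_pos a N by auto
    have "mean_occ N (scaled_a a N) i / real N \<le> (1 / (1 - exp (- scaled_a a N))) / real N"
      using mean_upper_j[OF b i] N by (intro divide_right_mono) auto
    then show "mean_occ N (scaled_a a N) i / real N \<le> 1 / (real N * (1 - exp (- (a * ln (real N) / real N))))"
      by (simp add: scaled_a_def field_simps)
  qed
  show "(\<lambda>N. 0) \<longlonglongrightarrow> (0::real)" by simp
  show "(\<lambda>N. 1 / (real N * (1 - exp (- (a * ln (real N) / real N))))) \<longlonglongrightarrow> 0"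
    using a by real_asymp
qed

lemma part3b:
  assumes a: "a > 1" and eta: "\<eta> < 1"
  shows "filterlim (\<lambda>N. real N powr (- \<eta>) * mean_occ N (scaled_a a N) 1) at_top sequentially"
proof (rule filterlim_at_top_mono)
  show "filterlim (\<lambda>N. real N powr (-\<eta>) * (exp (-(a * ln (real N) / real N)) * (1 - real N powr (-a)) / (a * ln (real N) / real N) - (real N)^2 * real N powr (-a))) at_top sequentially"
    using a eta by real_asymp
  show "eventually (\<lambda>N. real N powr (-\<eta>) * (exp (-(a * ln (real N) / real N)) * (1 - real N powr (-a)) / (a * ln (real N) / real N) - (real N)^2 * real N powr (-a))
       \<le> real N powr (- \<eta>) * mean_occ N (scaled_a a N) 1) sequentially"
  proof (rule eventually_sequentiallyI[of 2])
    fix N :: nat assume N: "2 \<le> N"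
    define b where "b = scaled_a a N"
    define q where "q = exp (- b)"
    have b: "b > 0" using sa_pos a N unfolding b_def by auto
    have q: "0 < q" "q < 1" using b unfolding q_def by auto
    have qN: "q ^ N = real N powr (- a)" unfolding q_def b_def using N by (intro qN_powr) auto
    have qN1: "q ^ N \<le> 1" using q by (simp add: power_le_one)
    have "(\<Sum>k<N. q ^ Suc k) = q * (1 - q ^ N) / (1 - q)" using q by (intro gp1) auto
    also have "\<dots> \<ge> q * (1 - q ^ N) / b"
      using q qN1 one_minus_q_le[of b] unfolding q_def
      by (intro divide_left_mono mult_nonneg_nonneg mult_pos_pos) auto
    finally have s: "q * (1 - q ^ N) / b \<le> (\<Sum>k<N. q ^ Suc k)" .
    have "q * (1 - q ^ N) / b - (real N)^2 * q ^ N \<le> mean_occ N b 1"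
      using mean1_lower[OF b, of N] s unfolding q_def by linarith
    then have "real N powr (- \<eta>) * (q * (1 - q ^ N) / b - (real N)^2 * q ^ N) \<le> real N powr (- \<eta>) * mean_occ N b 1"
      by (intro mult_left_mono) auto
    then show "real N powr (-\<eta>) * (exp (-(a * ln (real N) / real N)) * (1 - real N powr (-a)) / (a * ln (real N) / real N) - (real N)^2 * real N powr (-a))
       \<le> real N powr (- \<eta>) * mean_occ N (scaled_a a N) 1"
      unfolding qN[symmetric] unfolding q_def b_def scaled_a_def .
  qed
qed

lemma set_J:
  fixes b :: real
  assumes b: "b > 0"
  shows "{j::nat. real j < 2 / b} = {..<nat \<lceil>2 / b\<rceil>}"
proof (rule set_eqI)
  fix j :: nat
  have "real j < 2 / b \<longleftrightarrow> int j < \<lceil>2 / b\<rceil>" by (simp add: less_ceiling_iff)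
  also have "\<dots> \<longleftrightarrow> j < nat \<lceil>2 / b\<rceil>" by linarith
  finally show "j \<in> {j::nat. real j < 2 / b} \<longleftrightarrow> j \<in> {..<nat \<lceil>2 / b\<rceil>}" by simp
qed

lemma qJ_half:
  fixes b :: real
  assumes b: "b > 0"
  shows "exp (- b) ^ nat \<lceil>2 / b\<rceil> \<le> 1 / 2"
proof -
  define J where "J = nat \<lceil>2 / b\<rceil>"
  have "2 / b \<le> real J" unfolding J_def by linarith
  then have "2 \<le> b * real J" using b by (simp add: field_simps)
  then have "exp (- b * real J) \<le> exp (- 2)" by simp
  also have "exp (- 2) = 1 / exp (2::real)" by (simp add: exp_minus field_simps)
  also have "\<dots> \<le> 1 / 2" using exp_ge_add_one_self[of "2::real"] by (intro divide_left_mono) auto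
  finally show ?thesis unfolding J_def exp_pow .
qed

lemma part1:
  assumes a: "a > 0"
  shows "(\<lambda>N. (1 / real N) * (\<Sum>j\<in>{j::nat. real j < 2 / scaled_a a N}. mean_occ N (scaled_a a N) j)) \<longlonglongrightarrow> 1"
proof (rule real_tendsto_sandwich)
  have bnds: "1 - 1 / (real N * (1 - exp (- (a * ln (real N) / real N))))
       \<le> (1 / real N) * (\<Sum>j\<in>{j::nat. real j < 2 / scaled_a a N}. mean_occ N (scaled_a a N) j)
     \<and> (1 / real N) * (\<Sum>j\<in>{j::nat. real j < 2 / scaled_a a N}. mean_occ N (scaled_a a N) j) \<le> 1"
    if N: "2 \<le> N" for N :: nat
  proof -
    define b where "b = scaled_a a N"
    have b: "b > 0" using sa_pos a N unfolding b_def by auto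
    have q1: "0 < 1 - exp (- b)" using b by simp
    note S = set_J[OF b]
    have h: "exp (- b) ^ nat \<lceil>2 / b\<rceil> \<le> 1 / 2" by (rule qJ_half[OF b])
    note l = sum_mean_bounds(1)[OF b h, of N] and u = sum_mean_bounds(2)[OF b h, of N]
    have Npos: "real N > 0" using N by simp
    have "1 - 1 / (real N * (1 - exp (- b))) = (1 / real N) * (real N - 1 / (1 - exp (- b)))"
      using Npos q1 by (simp add: field_simps)
    also have "\<dots> \<le> (1 / real N) * (\<Sum>j<nat \<lceil>2 / b\<rceil>. mean_occ N b j)"
      using l Npos by (intro mult_left_mono) auto
    finally have L: "1 - 1 / (real N * (1 - exp (- b))) \<le> (1 / real N) * (\<Sum>j<nat \<lceil>2 / b\<rceil>. mean_occ N b j)" .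
    have "(1 / real N) * (\<Sum>j<nat \<lceil>2 / b\<rceil>. mean_occ N b j) \<le> (1 / real N) * real N"
      using u Npos by (intro mult_left_mono) auto
    then have U: "(1 / real N) * (\<Sum>j<nat \<lceil>2 / b\<rceil>. mean_occ N b j) \<le> 1" using Npos by simp
    have S': "{j::nat. real j < 2 / scaled_a a N} = {..<nat \<lceil>2 / scaled_a a N\<rceil>}" using S unfolding b_def .
    show ?thesis unfolding S' using L U unfolding b_def scaled_a_def by simp
  qed
  show "eventually (\<lambda>N. 1 - 1 / (real N * (1 - exp (- (a * ln (real N) / real N))))
       \<le> (1 / real N) * (\<Sum>j\<in>{j::nat. real j < 2 / scaled_a a N}. mean_occ N (scaled_a a N) j)) sequentially"
    by (rule eventually_sequentiallyI[of 2]) (use bnds in blast)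
  show "eventually (\<lambda>N. (1 / real N) * (\<Sum>j\<in>{j::nat. real j < 2 / scaled_a a N}. mean_occ N (scaled_a a N) j) \<le> 1) sequentially"
    by (rule eventually_sequentiallyI[of 2]) (use bnds in blast)
  show "(\<lambda>N. 1 - 1 / (real N * (1 - exp (- (a * ln (real N) / real N))))) \<longlonglongrightarrow> 1"
    using a by real_asymp
  show "(\<lambda>N. 1::real) \<longlonglongrightarrow> 1" by simp
qed



lemma part2_bound:
  fixes a :: real and N i :: nat
  assumes a: "0 < a" and N: "2 \<le> N"
    and LN: "real N powr a * ln (real N) \<le> real N" and L1: "1 \<le> real N powr a * ln (real N)"
    and f2: "0 \<le> 1 - exp (- (a * ln (real N) / real N * (real N - real N powr a * ln (real N))))"
    and f3: "0 \<le> 1 - exp (- ((real N powr a * ln (real N) - 1) * exp (- (a * ln (real N) / real N * (real N + 1)))))"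
  shows "exp (- (a * ln (real N) / real N * real i * (real N powr a * ln (real N))))
       * (1 - exp (- (a * ln (real N) / real N * (real N - real N powr a * ln (real N)))))
       * (1 - exp (- ((real N powr a * ln (real N) - 1) * exp (- (a * ln (real N) / real N * (real N + 1))))))
       * exp (- (a * ln (real N) / real N * (real N powr a * ln (real N))))
     \<le> real N powr (- a) * mean_occ N (scaled_a a N) i"
proof -
  define b where "b = scaled_a a N"
  define L where "L = real N powr a * ln (real N)"
  define K where "K = nat \<lfloor>L\<rfloor>"
  define q where "q = exp (- b)"
  define y where "y = 1 - q ^ (N + 1 - K)"
  have b: "b > 0" using sa_pos a N unfolding b_def by auto
  have bdef: "b = a * ln (real N) / real N" unfolding b_def scaled_a_def ..
  have q: "0 < q" "q < 1" using b unfolding q_def by auto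
  have KL: "real K \<le> L" "L - 1 \<le> real K" using L1 unfolding K_def L_def by linarith+
  have KN: "K \<le> N" using KL LN unfolding L_def by linarith
  have rK: "real (N + 1 - K) = real N + 1 - real K" using KN by simp
  have qpow: "q ^ n = exp (- b * real n)" for n unfolding q_def by (rule exp_pow[symmetric])
  have y01: "0 \<le> y" "y < 1" unfolding y_def using q by (auto simp: power_le_one)
  have qN: "q ^ N = real N powr (- a)" unfolding q_def b_def using N by (intro qN_powr) auto
  have M: "q ^ (i * K) * (y * (1 - y ^ K) / (1 - y)) \<le> mean_occ N b i"
    using mean_lowerK[OF b KN, of i] gp1[OF y01] unfolding q_def y_def by simp
  have "real N powr (- a) * mean_occ N b i \<ge> q ^ N * (q ^ (i * K) * (y * (1 - y ^ K) / (1 - y)))"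
    unfolding qN[symmetric] using M q by (intro mult_left_mono) auto
  moreover have "q ^ N * (q ^ (i * K) * (y * (1 - y ^ K) / (1 - y)))
      = q ^ (i * K) * y * (1 - y ^ K) * (q ^ N / q ^ (N + 1 - K))"
    unfolding y_def by (simp add: field_simps)
  ultimately have M2: "q ^ (i * K) * y * (1 - y ^ K) * (q ^ N / q ^ (N + 1 - K)) \<le> real N powr (- a) * mean_occ N b i"
    by simp
  define f1 where "f1 = exp (- (b * real i * L))"
  define f2 where "f2 = 1 - exp (- (b * (real N - L)))"
  define f3 where "f3 = 1 - exp (- ((L - 1) * exp (- (b * (real N + 1)))))"
  define f4 where "f4 = exp (- (b * L))"
  have A: "f1 \<le> q ^ (i * K)"
  proof -
    have "b * real i * real K \<le> b * real i * L" using KL b by (intro mult_left_mono) auto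
    then show ?thesis unfolding f1_def qpow by simp
  qed
  have B: "f2 \<le> y"
  proof -
    have "b * (real N - L) \<le> b * (real N + 1 - real K)" using KL b by (intro mult_left_mono) auto
    then show ?thesis unfolding f2_def y_def qpow rK by simp
  qed
  have C: "f3 \<le> 1 - y ^ K"
  proof -
    have e1: "y \<le> exp (- (1 - y))" using exp_ge_add_one_self[of "- (1 - y)"] by simp
    have "y ^ K \<le> exp (- (1 - y)) ^ K" using e1 y01 by (intro power_mono) auto
    also have "\<dots> = exp (- ((1 - y) * real K))" by (simp only: exp_pow[symmetric]) (simp add: algebra_simps)
    also have "\<dots> \<le> exp (- ((L - 1) * exp (- (b * (real N + 1)))))"
    proof -
      have "exp (- (b * (real N + 1))) \<le> 1 - y"
        unfolding y_def qpow rK using b KL(1) by (simp add: mult_left_mono)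
      then have "(L - 1) * exp (- (b * (real N + 1))) \<le> real K * (1 - y)"
        using KL L1 y01 by (intro mult_mono) auto
      then show ?thesis by (simp add: mult.commute)
    qed
    finally show ?thesis unfolding f3_def by simp
  qed
  have D: "f4 \<le> q ^ N / q ^ (N + 1 - K)"
  proof -
    have "q ^ N / q ^ (N + 1 - K) = exp (- b * real N - (- b * real (N + 1 - K)))"
      unfolding qpow exp_diff ..
    also have "\<dots> = exp (b * (1 - real K))" unfolding rK by (simp add: algebra_simps)
    finally have e: "q ^ N / q ^ (N + 1 - K) = exp (b * (1 - real K))" .
    have "b * real K \<le> b * L" using b KL by (intro mult_left_mono) auto
    moreover have "b * (1 - real K) = b - b * real K" by (simp add: algebra_simps)
    ultimately have "- (b * L) \<le> b * (1 - real K)" using b by linarith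
    then show ?thesis unfolding e f4_def by simp
  qed
  have nn: "0 \<le> f1" "0 \<le> f2" "0 \<le> f3" "0 \<le> f4"
    using f2 f3 unfolding f1_def f2_def f3_def f4_def L_def bdef by auto
  have nn2: "0 \<le> q ^ (i * K)" "0 \<le> y" "0 \<le> 1 - y ^ K"
    using q y01 by (auto simp: power_le_one)
  have "f1 * f2 \<le> q ^ (i * K) * y" using A B nn nn2 by (intro mult_mono) auto
  then have "f1 * f2 * f3 \<le> q ^ (i * K) * y * (1 - y ^ K)" using C by (rule mult_mono) (use nn nn2 in auto)
  then have "f1 * f2 * f3 * f4 \<le> q ^ (i * K) * y * (1 - y ^ K) * (q ^ N / q ^ (N + 1 - K))"
    using D by (rule mult_mono) (use nn nn2 mult_nonneg_nonneg in auto)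
  with M2 have "f1 * f2 * f3 * f4 \<le> real N powr (- a) * mean_occ N b i" by linarith
  then show ?thesis unfolding f1_def f2_def f3_def f4_def L_def bdef b_def[symmetric] .
qed



lemma part2:
  assumes a: "0 < a" "a < 1"
    and io: "(\<lambda>N. real (i N)) \<in> o(\<lambda>N. real N powr (1 - a) / (ln (real N))^2)"
  shows "(\<lambda>N. real N powr (- a) * mean_occ N (scaled_a a N) (i N)) \<longlonglongrightarrow> 1"
proof (rule real_tendsto_sandwich)
  define f1 where "f1 N = exp (- (a * ln (real N) / real N * real (i N) * (real N powr a * ln (real N))))" for N
  define f2 where "f2 N = 1 - exp (- (a * ln (real N) / real N * (real N - real N powr a * ln (real N))))" for N :: nat
  define f3 where "f3 N = 1 - exp (- ((real N powr a * ln (real N) - 1) * exp (- (a * ln (real N) / real N * (real N + 1)))))" for N :: nat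
  define f4 where "f4 N = exp (- (a * ln (real N) / real N * (real N powr a * ln (real N))))" for N :: nat
  have e1: "eventually (\<lambda>N::nat. real N powr a * ln (real N) \<le> real N) sequentially" using a by real_asymp
  have e2: "eventually (\<lambda>N::nat. 1 \<le> real N powr a * ln (real N)) sequentially" using a by real_asymp
  have e3: "eventually (\<lambda>N. 0 \<le> f2 N) sequentially" unfolding f2_def using a by real_asymp
  have e4: "eventually (\<lambda>N. 0 \<le> f3 N) sequentially" unfolding f3_def using a by real_asymp
  have e5: "eventually (\<lambda>N::nat. 2 \<le> N) sequentially" by (rule eventually_sequentiallyI[of 2])
  show "eventually (\<lambda>N. f1 N * f2 N * f3 N * f4 N \<le> real N powr (- a) * mean_occ N (scaled_a a N) (i N)) sequentially"
    using e1 e2 e3 e4 e5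
  proof eventually_elim
    case (elim N)
    then show ?case unfolding f1_def f2_def f3_def f4_def using a by (intro part2_bound) auto
  qed
  show "eventually (\<lambda>N. real N powr (- a) * mean_occ N (scaled_a a N) (i N) \<le> 1) sequentially"
  proof (rule eventually_sequentiallyI[of 2])
    fix N :: nat assume N: "2 \<le> N"
    have b: "scaled_a a N > 0" using sa_pos a N by auto
    have qN: "exp (- scaled_a a N) ^ N = real N powr (- a)" using N by (intro qN_powr) auto
    have pos: "real N powr (- a) > 0" using N by simp
    have "real N powr (- a) * mean_occ N (scaled_a a N) (i N) \<le> real N powr (- a) * (1 / exp (- scaled_a a N) ^ N)"
      using mean_upper_all[OF b] pos by (intro mult_left_mono) auto
    also have "\<dots> = 1" unfolding qN using pos by simp
    finally show "real N powr (- a) * mean_occ N (scaled_a a N) (i N) \<le> 1" .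
  qed
  show "(\<lambda>N. 1::real) \<longlonglongrightarrow> 1" by simp
  have l2: "f2 \<longlonglongrightarrow> 1" unfolding f2_def using a by real_asymp
  have l3: "f3 \<longlonglongrightarrow> 1" unfolding f3_def using a by real_asymp
  have l4: "f4 \<longlonglongrightarrow> 1" unfolding f4_def using a by real_asymp
  define h where "h N = real N powr (1 - a) / (ln (real N))^2" for N :: nat
  have lh: "(\<lambda>N. a * ln (real N) / real N * (real N powr a * ln (real N)) * h N) \<longlonglongrightarrow> a"
    unfolding h_def using a by real_asymp
  have li: "(\<lambda>N. real (i N) / h N) \<longlonglongrightarrow> 0"
    unfolding h_def by (rule smalloD_tendsto[OF io])
  have ev: "eventually (\<lambda>N. (a * ln (real N) / real N * (real N powr a * ln (real N)) * h N) * (real (i N) / h N)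
        = a * ln (real N) / real N * real (i N) * (real N powr a * ln (real N))) sequentially"
  proof (rule eventually_sequentiallyI[of 2])
    fix N :: nat assume N: "2 \<le> N"
    have "ln (real N) > 0" using N by simp
    then have "h N \<noteq> 0" unfolding h_def using N by simp
    then show "(a * ln (real N) / real N * (real N powr a * ln (real N)) * h N) * (real (i N) / h N)
      = a * ln (real N) / real N * real (i N) * (real N powr a * ln (real N))"
      by (simp add: field_simps)
  qed
  have "(\<lambda>N. (a * ln (real N) / real N * (real N powr a * ln (real N)) * h N) * (real (i N) / h N)) \<longlonglongrightarrow> a * 0"
    by (rule tendsto_mult[OF lh li])
  then have "(\<lambda>N. (a * ln (real N) / real N * (real N powr a * ln (real N)) * h N) * (real (i N) / h N)) \<longlonglongrightarrow> 0"
    by simp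
  then have lt0: "(\<lambda>N. a * ln (real N) / real N * real (i N) * (real N powr a * ln (real N))) \<longlonglongrightarrow> 0"
    by (rule Lim_transform_eventually[OF _ ev])
  have l1: "f1 \<longlonglongrightarrow> 1"
  proof -
    have "(\<lambda>N. exp (- (a * ln (real N) / real N * real (i N) * (real N powr a * ln (real N))))) \<longlonglongrightarrow> exp (- 0)"
      by (intro tendsto_exp tendsto_minus lt0)
    then show ?thesis unfolding f1_def by simp
  qed
  show "(\<lambda>N. f1 N * f2 N * f3 N * f4 N) \<longlonglongrightarrow> 1"
    using tendsto_mult[OF tendsto_mult[OF tendsto_mult[OF l1 l2] l3] l4] by simp
qed


theorem theorem4:
  shows
   "(\<forall>a::real. a > 0 \<longrightarrow>
       (\<lambda>N. (1 / real N) * (\<Sum>j\<in>{j::nat. real j < 2 / scaled_a a N}. mean_occ N (scaled_a a N) j))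
         \<longlonglongrightarrow> 1)
    \<and> (\<forall>a::real. 0 < a \<and> a < 1 \<longrightarrow>
       (\<forall>i :: nat \<Rightarrow> nat.
          (\<lambda>N. real (i N)) \<in> o(\<lambda>N. real N powr (1 - a) / (ln (real N))^2) \<longrightarrow>
          (\<lambda>N. real N powr (- a) * mean_occ N (scaled_a a N) (i N)) \<longlonglongrightarrow> 1))
    \<and> (\<forall>a::real. a > 1 \<longrightarrow>
       (\<forall>i::nat. i \<ge> 1 \<longrightarrow>
          (\<lambda>N. mean_occ N (scaled_a a N) i / real N) \<longlonglongrightarrow> 0)
       \<and> (\<forall>\<eta>::real. \<eta> < 1 \<longrightarrow>
          filterlim (\<lambda>N. real N powr (- \<eta>) * mean_occ N (scaled_a a N) 1) at_top sequentially))"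
proof (intro conjI allI impI)
  fix a :: real assume "a > 0"
  then show "(\<lambda>N. (1 / real N) * (\<Sum>j\<in>{j::nat. real j < 2 / scaled_a a N}. mean_occ N (scaled_a a N) j)) \<longlonglongrightarrow> 1"
    by (rule part1)
next
  fix a :: real and i :: "nat \<Rightarrow> nat"
  assume h: "0 < a \<and> a < 1" and io: "(\<lambda>N. real (i N)) \<in> o(\<lambda>N. real N powr (1 - a) / (ln (real N))^2)"
  show "(\<lambda>N. real N powr (- a) * mean_occ N (scaled_a a N) (i N)) \<longlonglongrightarrow> 1"
    using h io by (intro part2) auto
next
  fix a :: real and i :: nat assume "a > 1" "i \<ge> 1"
  then show "(\<lambda>N. mean_occ N (scaled_a a N) i / real N) \<longlonglongrightarrow> 0" by (rule part3a)
next
  fix a \<eta> :: real assume "a > 1" "\<eta> < 1"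
  then show "filterlim (\<lambda>N. real N powr (- \<eta>) * mean_occ N (scaled_a a N) 1) at_top sequentially"
    by (rule part3b)
qed

end
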